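(* Let $r\in(0,1/2)$. Consider the independent-coding distributed delay diversity scheme described in the context, with deterministic delays whose relative delay $T_0=|\tau_2-\tau_1|$ satisfies $T_0B_w\ge2$. Then $$d_{TDA}(r):=\lim_{\mathrm{SNR}\to\infty}-\frac{\log\Pr[I_{TDA}<R(\mathrm{SNR})]}{\log\mathrm{SNR}}=3(1-2r).$$ This equals the diversity–multiplexing tradeoff $d_{stc}(r)$ of the synchronous space-time-coded scheme.
   Context: Network: a source $N_S$, two relays $N_{R_1},N_{R_2}$ and a destination $N_D$. The gains $\alpha_{i,j}$, $i\in\{S,R_1,R_2\}$, $j\in\{R_1,R_2,D\}$, $i\neq j$, are mutually independent zero-mean circularly symmetric complex Gaussian random variables with variances $\sigma^2_{i,j}>0$. For $\mathrm{SNR}>0$ set $\rho_0=\frac23\mathrm{SNR}$. The target rate is $R=R(\mathrm{SNR})=r\log(1+\mathrm{SNR}\,\sigma^2_{S,D})$. Relay $R_k$ belongs to the decoding set $\mathcal D(s)$ iff $\frac12\log(1+\rho_0|\alpha_{S,R_k}|^2)\ge R$. Independent-coding distributed delay diversity scheme: - Signals have baseband bandwidth $B_w>0$. - In phase 2 all successful relays send the same Gaussian codeword, independent of the source codeword. - The signal from relay $R_k$ reaches $N_D$ with delay $\tau_k$. - Conditioned on $\mathcal D(s)$, $$I_{TDA}=\frac12\log(1+\rho_0|\alpha_{S,D}|^2)+\frac{1}{2B_w}\int_{-B_w/2}^{B_w/2}\log\left(1+\rho_0\Big|\sum_{R_k\in\mathcal D(s)}\alpha_{R_k,D}e^{j2\pi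 f\tau_k}\Big|^2\right)df,$$ where an empty sum equals $0$. The probability $\Pr[I_{TDA}<R]$ averages over the gains, including the randomness of $\mathcal D(s)$. *)

theory Defs
  imports "HOL-Probability.Probability"
begin

datatype node = S | R1 | R2 | D

definition links :: "(node \<times> node) set" where
  "links = {(i,j). i \<in> {S,R1,R2} \<and> j \<in> {R1,R2,D} \<and> i \<noteq> j}"

text \<open>Density (w.r.t. Lebesgue measure on the complex plane) of a zero-mean circularly
  symmetric complex Gaussian with variance s2 = E of the squared modulus.\<close>
definition cgauss_density :: "real \<Rightarrow> complex \<Rightarrow> real" where
  "cgauss_density s2 z = exp (- (cmod z)\<^sup>2 / s2) / (pi * s2)"

definition rho0 :: "real \<Rightarrow> real" where
  "rho0 snr = 2/3 * snr"

definition target_rate :: "real \<Rightarrow> real \<Rightarrow> real \<Rightarrow> real" where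
  "target_rate r s2SD snr = r * ln (1 + snr * s2SD)"

definition dec_set :: "real \<Rightarrow> real \<Rightarrow> (node \<Rightarrow> node \<Rightarrow> complex) \<Rightarrow> node set" where
  "dec_set snr Rt a = {k \<in> {R1, R2}. 1/2 * ln (1 + rho0 snr * (cmod (a S k))\<^sup>2) \<ge> Rt}"

definition I_TDA :: "real \<Rightarrow> (node \<Rightarrow> real) \<Rightarrow> real \<Rightarrow> real \<Rightarrow> (node \<Rightarrow> node \<Rightarrow> complex) \<Rightarrow> real" where
  "I_TDA Bw tau snr Rt a =
     1/2 * ln (1 + rho0 snr * (cmod (a S D))\<^sup>2)
     + 1 / (2 * Bw) * integral {-Bw/2..Bw/2}
         (\<lambda>f. ln (1 + rho0 snr *
            (cmod (\<Sum>k\<in>dec_set snr Rt a. a k D * cis (2 * pi * f * tau k)))\<^sup>2))"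

definition outage_TDA ::
  "'w measure \<Rightarrow> (node \<Rightarrow> node \<Rightarrow> 'w \<Rightarrow> complex) \<Rightarrow> (node \<Rightarrow> node \<Rightarrow> real)
    \<Rightarrow> real \<Rightarrow> (node \<Rightarrow> real) \<Rightarrow> real \<Rightarrow> real \<Rightarrow> real" where
  "outage_TDA M \<alpha> s2 Bw tau r snr =
     measure M {\<omega> \<in> space M.
        I_TDA Bw tau snr (target_rate r (s2 S D) snr) (\<lambda>i j. \<alpha> i j \<omega>)
          < target_rate r (s2 S D) snr}"

end

theory Submission
  imports Defs "HOL-Real_Asymp.Real_Asymp"
begin



lemma cgauss_le: "s > 0 \<Longrightarrow> cgauss_density s z \<le> 1/(pi * s)"
  unfolding cgauss_density_def by (auto simp: divide_right_mono)

lemma cgauss_ge: "s > 0 \<Longrightarrow> (cmod z)\<^sup>2 \<le> s \<Longrightarrow> cgauss_density s z \<ge> exp (-1)/(pi * s)"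
  unfolding cgauss_density_def
  by (intro divide_right_mono) (auto simp: field_simps)

lemma emeasure_ball_complex: "r \<ge> 0 \<Longrightarrow> emeasure lborel (ball (0::complex) r) = ennreal (pi * r^2)"
  using emeasure_ball[of r "0::complex"] by (simp add: unit_ball_vol_2)

lemma gauss_bounds:
  assumes M: "prob_space M" and dist: "distributed M lborel X (\<lambda>z. ennreal (cgauss_density s z))"
    and s: "s > 0" and w: "0 \<le> w"
  shows "{\<omega>\<in>space M. (cmod (X \<omega>))\<^sup>2 < w} \<in> sets M"
    and "measure M {\<omega>\<in>space M. (cmod (X \<omega>))\<^sup>2 < w} \<le> w/s"
    and "w \<le> s \<Longrightarrow> measure M {\<omega>\<in>space M. (cmod (X \<omega>))\<^sup>2 < w} \<ge> w/(exp 1 * s)"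
proof -
  interpret prob_space M by fact
  have Xm: "X \<in> measurable M lborel" using distributed_measurable[OF dist] .
  define A where "A = ball (0::complex) (sqrt w)"
  have eqset: "{\<omega>\<in>space M. (cmod (X \<omega>))\<^sup>2 < w} = X -` A \<inter> space M"
    unfolding A_def using w
    by (auto simp: real_less_rsqrt) (metis norm_ge_zero power_strict_mono real_sqrt_pow2 zero_less_numeral)
  have A: "A \<in> sets lborel" unfolding A_def by simp
  show "{\<omega>\<in>space M. (cmod (X \<omega>))\<^sup>2 < w} \<in> sets M"
    unfolding eqset using Xm A by (simp add: measurable_sets)
  have em: "emeasure M (X -` A \<inter> space M) = (\<integral>\<^sup>+z. ennreal (cgauss_density s z) * indicator A z \<partial>lborel)"
  proof -
    have "emeasure M (X -` A \<inter> space M) = emeasure (distr M lborel X) A"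
      using Xm A by (simp add: emeasure_distr)
    also have "\<dots> = emeasure (density lborel (\<lambda>z. ennreal (cgauss_density s z))) A"
      using distributed_distr_eq_density[OF dist] by simp
    also have "\<dots> = (\<integral>\<^sup>+z. ennreal (cgauss_density s z) * indicator A z \<partial>lborel)" using A
      by (subst emeasure_density) (auto simp: cgauss_density_def)
    finally show ?thesis .
  qed
  have ebA: "emeasure lborel A = ennreal (pi * w)" unfolding A_def using w
    by (simp add: emeasure_ball_complex)
  have "emeasure M (X -` A \<inter> space M) \<le> (\<integral>\<^sup>+z. ennreal (1/(pi * s)) * indicator A z \<partial>lborel)"
    unfolding em by (intro nn_integral_mono mult_right_mono) (auto intro!: ennreal_leI cgauss_le[OF s])
  also have "\<dots> = ennreal (1/(pi * s)) * emeasure lborel A" using A by (simp add: nn_integral_cmult_indicator)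
  also have "\<dots> = ennreal (w/s)" using ebA s by (simp add: ennreal_mult'[symmetric])
  finally have "emeasure M (X -` A \<inter> space M) \<le> ennreal (w/s)" .
  then show "measure M {\<omega>\<in>space M. (cmod (X \<omega>))\<^sup>2 < w} \<le> w/s"
    unfolding eqset using s w by (simp add: measure_def enn2real_leI)
  assume ws: "w \<le> s"
  have "ennreal (w/(exp 1 * s)) = ennreal (exp (-1)/(pi * s)) * emeasure lborel A"
    using ebA s w by (simp add: ennreal_mult'[symmetric] exp_minus field_simps)
  also have "\<dots> = (\<integral>\<^sup>+z. ennreal (exp (-1)/(pi * s)) * indicator A z \<partial>lborel)" using A by (simp add: nn_integral_cmult_indicator)
  also have "\<dots> \<le> emeasure M (X -` A \<inter> space M)"
    unfolding em
  proof (intro nn_integral_mono)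
    fix z show "ennreal (exp (-1)/(pi * s)) * indicator A z \<le> ennreal (cgauss_density s z) * indicator A z"
    proof (cases "z \<in> A")
      case True
      then have "(cmod z)\<^sup>2 \<le> s" unfolding A_def using w ws
        by (auto simp: real_sqrt_less_iff) (smt (verit) norm_ge_zero power_mono real_sqrt_pow2)
      then show ?thesis using True by (auto intro!: ennreal_leI cgauss_ge[OF s])
    qed simp
  qed
  finally have "ennreal (w/(exp 1 * s)) \<le> emeasure M (X -` A \<inter> space M)" .
  then show "measure M {\<omega>\<in>space M. (cmod (X \<omega>))\<^sup>2 < w} \<ge> w/(exp 1 * s)"
    unfolding eqset using s w by (simp add: emeasure_eq_measure)
qed



lemma all_but_one:
  fixes a1 a2 :: complex and z :: "nat \<Rightarrow> complex"
  assumes zn: "\<And>j. cmod (z j) = 1" and sep: "\<And>i j. i < K \<Longrightarrow> j < K \<Longrightarrow> i \<noteq> j \<Longrightarrow> cmod (z i - z j) \<ge> d"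
    and d: "0 < d" "d \<le> 2"
  shows "\<exists>j0. \<forall>j<K. j \<noteq> j0 \<longrightarrow> (cmod (a1 + a2 * z j))\<^sup>2 \<ge> d\<^sup>2/16 * max ((cmod a1)\<^sup>2) ((cmod a2)\<^sup>2)"
proof (cases "cmod a2 < cmod a1 / 2")
  case True
  have "\<forall>j<K. (cmod (a1 + a2 * z j))\<^sup>2 \<ge> d\<^sup>2/16 * max ((cmod a1)\<^sup>2) ((cmod a2)\<^sup>2)"
  proof (intro allI impI)
    fix j assume "j < K"
    have "cmod (a1 + a2 * z j) \<ge> cmod a1 - cmod (a2 * z j)" by (metis norm_diff_ineq)
    also have "cmod (a2 * z j) = cmod a2" by (simp add: norm_mult zn)
    finally have h: "cmod (a1 + a2 * z j) \<ge> cmod a1 / 2" using True by linarith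
    have "d\<^sup>2 \<le> 2\<^sup>2" using d by (intro power_mono) auto
    then have A: "d\<^sup>2/16 \<le> 1/4" by simp
    have B: "max ((cmod a1)\<^sup>2) ((cmod a2)\<^sup>2) = (cmod a1)\<^sup>2"
    proof -
      have "cmod a2 \<le> cmod a1" using True norm_ge_zero[of a2] by linarith
      then have "(cmod a2)\<^sup>2 \<le> (cmod a1)\<^sup>2" by (intro power_mono) auto
      then show ?thesis by simp
    qed
    have C: "(cmod a1 / 2)\<^sup>2 \<le> (cmod (a1 + a2 * z j))\<^sup>2"
      using h by (intro power_mono) auto
    show "(cmod (a1 + a2 * z j))\<^sup>2 \<ge> d\<^sup>2/16 * max ((cmod a1)\<^sup>2) ((cmod a2)\<^sup>2)"
    proof -
      have "d\<^sup>2/16 * (cmod a1)\<^sup>2 \<le> 1/4 * (cmod a1)\<^sup>2" using A by (intro mult_right_mono) auto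
      also have "\<dots> = (cmod a1 / 2)\<^sup>2" by (simp add: power_divide)
      also have "\<dots> \<le> (cmod (a1 + a2 * z j))\<^sup>2" by (rule C)
      finally show ?thesis using B by simp
    qed
  qed
  then show ?thesis by blast
next
  case False
  define B where "B = cmod a2 * d / 2"
  have bad_unique: "i = j" if "i < K" "j < K" "cmod (a1 + a2 * z i) < B" "cmod (a1 + a2 * z j) < B" for i j
  proof (rule ccontr)
    assume "i \<noteq> j"
    then have "cmod (z i - z j) \<ge> d" using sep that by auto
    then have "cmod a2 * d \<le> cmod a2 * cmod (z i - z j)" by (simp add: mult_left_mono)
    also have "\<dots> = cmod ((a1 + a2 * z i) - (a1 + a2 * z j))" by (simp add: norm_mult[symmetric] algebra_simps)
    also have "\<dots> \<le> cmod (a1 + a2 * z i) + cmod (a1 + a2 * z j)" by (rule norm_triangle_ineq4)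
    finally show False using that unfolding B_def by linarith
  qed
  have good: "(cmod (a1 + a2 * z j))\<^sup>2 \<ge> d\<^sup>2/16 * max ((cmod a1)\<^sup>2) ((cmod a2)\<^sup>2)"
    if "cmod (a1 + a2 * z j) \<ge> B" for j
  proof -
    have m: "max ((cmod a1)\<^sup>2) ((cmod a2)\<^sup>2) \<le> 4 * (cmod a2)\<^sup>2"
    proof -
      have "cmod a1 \<le> 2 * cmod a2" using False by simp
      then have "(cmod a1)\<^sup>2 \<le> (2 * cmod a2)\<^sup>2" by (intro power_mono) auto
      moreover have "(cmod a2)\<^sup>2 \<le> 4 * (cmod a2)\<^sup>2" by simp
      ultimately show ?thesis by (simp add: power_mult_distrib)
    qed
    have "d\<^sup>2/16 * max ((cmod a1)\<^sup>2) ((cmod a2)\<^sup>2) \<le> d\<^sup>2/16 * (4 * (cmod a2)\<^sup>2)"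
      using m by (intro mult_left_mono) auto
    also have "\<dots> = B\<^sup>2" unfolding B_def by (simp add: power_mult_distrib power_divide)
    also have "\<dots> \<le> (cmod (a1 + a2 * z j))\<^sup>2" using that d unfolding B_def by (intro power_mono) auto
    finally show ?thesis .
  qed
  show ?thesis
  proof (cases "\<exists>i<K. cmod (a1 + a2 * z i) < B")
    case True
    then obtain i where i: "i < K" "cmod (a1 + a2 * z i) < B" by blast
    show ?thesis
    proof (intro exI[of _ i] allI impI)
      fix j assume jK: "j < K" and ji: "j \<noteq> i"
      show "(cmod (a1 + a2 * z j))\<^sup>2 \<ge> d\<^sup>2/16 * max ((cmod a1)\<^sup>2) ((cmod a2)\<^sup>2)"
        using bad_unique[of i j] i jK ji good[of j] by (metis not_le)
    qed
  next
    case False then show ?thesis using good by (meson not_le)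
  qed
qed



lemma cmod_cis_diff: "cmod (cis a - cis b) = cmod (cis (a - b) - 1)"
proof -
  have "cis b * (cis (a - b) - 1) = cis (b + (a - b)) - cis b" by (simp add: algebra_simps cis_mult)
  then have "cis a - cis b = cis b * (cis (a - b) - 1)" by simp
  then show ?thesis by (simp add: norm_mult)
qed

lemma cis_ne_1:
  assumes "0 < \<bar>u\<bar>" "\<bar>u\<bar> < 2*pi" shows "cmod (cis u - 1) > 0"
proof (rule ccontr)
  assume "\<not> cmod (cis u - 1) > 0"
  then have "cis u = 1" by simp
  then have "cos u = 1" by (metis Re_complex_of_real cis.sel(1) one_complex.sel(1))
  then obtain n :: int where n: "u = real_of_int n * 2 * pi" using cos_one_2pi_int by blast
  have "\<bar>u\<bar> = \<bar>real_of_int n\<bar> * (2*pi)" using n by (simp add: abs_mult)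
  then show False using assms
    by (cases "n = 0") (auto simp: mult_less_cancel_right1)
qed

lemma sep_exists:
  fixes T :: real and K :: nat
  assumes T: "T \<noteq> 0" and K: "K \<ge> 1"
  shows "\<exists>d>0. d \<le> 2 \<and> (\<forall>i j x. i < K \<longrightarrow> j < K \<longrightarrow> i \<noteq> j \<longrightarrow>
     cmod (cis (2*pi*(x + real i * (1/(2*real K^2*\<bar>T\<bar>)))*T) - cis (2*pi*(x + real j * (1/(2*real K^2*\<bar>T\<bar>)))*T)) \<ge> d)"
proof -
  define \<sigma> where "\<sigma> = 1/(2*real K^2*\<bar>T\<bar>)"
  have \<sigma>pos: "\<sigma> > 0" using T K by (simp add: \<sigma>_def)
  define h where "h m = cmod (cis (2*pi*real m*\<sigma>*T) - 1)" for m :: nat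
  have hpos: "h m > 0" if "1 \<le> m" "m < K" for m
  proof -
    have e: "\<bar>2*pi*real m*\<sigma>*T\<bar> = 2*pi*(real m/(2*real K^2))"
      using T K that by (simp add: \<sigma>_def abs_mult field_simps)
    have "real m / (2*real K^2) < 1"
    proof -
      have "real m < real K" using that by simp
      also have "real K \<le> real K^2" using K by (simp add: power2_eq_square)
      also have "\<dots> < 2 * real K^2" using K by simp
      finally show ?thesis using K by simp
    qed
    moreover have "real m / (2*real K^2) > 0" using that K by simp
    moreover define q where "q = real m/(2*real K^2)"
    ultimately have q: "q < 1" "0 < q" by auto
    have "0 < 2*pi*q" using q by simp
    moreover have "2*pi*q < 2*pi" using q by simp
    ultimately show ?thesis unfolding h_def by (intro cis_ne_1) (simp_all only: e q_def[symmetric])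
  qed
  define d where "d = Min (insert 2 (h ` {1..<K}))"
  have d0: "d > 0" unfolding d_def using hpos by (subst Min_gr_iff) auto
  have d2: "d \<le> 2" unfolding d_def by simp
  have dh: "d \<le> h m" if "1 \<le> m" "m < K" for m unfolding d_def using that by (intro Min_le) auto
  have key: "cmod (cis (2*pi*(x + real i * \<sigma>)*T) - cis (2*pi*(x + real j * \<sigma>)*T)) \<ge> d"
    if "i < K" "j < K" "j < i" for i j x
  proof -
    have "cmod (cis (2*pi*(x + real i * \<sigma>)*T) - cis (2*pi*(x + real j * \<sigma>)*T)) = h (i - j)"
      unfolding cmod_cis_diff h_def using that by (simp add: algebra_simps of_nat_diff)
    then show ?thesis using dh[of "i - j"] that by simp
  qed
  show ?thesis unfolding \<sigma>_def[symmetric]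
  proof (intro exI[of _ d] conjI d0 d2 allI impI)
    fix i j x assume "i < K" "j < K" "i \<noteq> j"
    then show "cmod (cis (2*pi*(x + real i * \<sigma>)*T) - cis (2*pi*(x + real j * \<sigma>)*T)) \<ge> d"
      using key[of i j x] key[of j i x] by (metis linorder_neqE_nat norm_minus_commute)
  qed
qed



lemma shift_avg:
  fixes g :: "real \<Rightarrow> real" and K :: nat
  assumes cont: "continuous_on UNIV g" and nn: "\<And>x. g x \<ge> 0"
    and \<sigma>: "\<sigma> \<ge> 0" and ab: "a + real K * \<sigma> \<le> b"
    and pt: "\<And>x. (\<Sum>j<K. g (x + real j * \<sigma>)) \<ge> B"
  shows "real K * integral {a..b} g \<ge> (b - a - real K * \<sigma>) * B"
proof -
  define b' where "b' = b - real K * \<sigma>"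
  have ab': "a \<le> b'" using ab by (simp add: b'_def)
  have intg: "g integrable_on {x..y}" for x y
    by (rule integrable_continuous_interval) (rule continuous_on_subset[OF cont], simp)
  have step: "integral {a..b'} (\<lambda>x. g (real j * \<sigma> + x)) \<le> integral {a..b} g" if "j < K" for j
  proof -
    have "integral {a..b'} (\<lambda>x. g (real j * \<sigma> + x)) = integral {a..b'} (g \<circ> (+) (real j * \<sigma>))"
      by (simp add: o_def)
    also have "\<dots> = integral {a + real j * \<sigma>..b' + real j * \<sigma>} g" by (rule integral_shift_Icc_real)
    also have "\<dots> \<le> integral {a..b} g"
    proof (rule integral_subset_le)
      have "real j * \<sigma> \<le> real K * \<sigma>" using that \<sigma> by (intro mult_right_mono) auto
      then show "{a + real j * \<sigma>..b' + real j * \<sigma>} \<subseteq> {a..b}" using \<sigma> by (auto simp: b'_def)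
    qed (auto simp: intg nn)
    finally show ?thesis .
  qed
  have "(b - a - real K * \<sigma>) * B = integral {a..b'} (\<lambda>x. B)"
    using ab' by (simp add: b'_def)
  also have "\<dots> \<le> integral {a..b'} (\<lambda>x. \<Sum>j<K. g (real j * \<sigma> + x))"
  proof (rule integral_le)
    show "(\<lambda>x. \<Sum>j<K. g (real j * \<sigma> + x)) integrable_on {a..b'}"
      by (intro integrable_continuous_interval continuous_intros continuous_on_compose2[OF cont]) auto
    show "\<And>x. x \<in> {a..b'} \<Longrightarrow> B \<le> (\<Sum>j<K. g (real j * \<sigma> + x))" using pt by (simp add: add.commute)
  qed (rule integrable_const_ivl)
  also have "\<dots> = (\<Sum>j<K. integral {a..b'} (\<lambda>x. g (real j * \<sigma> + x)))"
    by (rule integral_sum) (auto intro!: integrable_continuous_interval continuous_intros continuous_on_compose2[OF cont])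
  also have "\<dots> \<le> (\<Sum>j<K. integral {a..b} g)" by (intro sum_mono step) auto
  also have "\<dots> = real K * integral {a..b} g" by simp
  finally show ?thesis .
qed



lemma pos_arg_ne: "0 \<le> \<rho> \<Longrightarrow> 1 + \<rho> * x\<^sup>2 \<noteq> (0::real)"
  by (metis add_pos_nonneg mult_nonneg_nonneg zero_le_power2 zero_less_one order_less_irrefl)

lemma J_lower:
  fixes t1 t2 Bw :: real and K :: nat
  assumes TB: "\<bar>t2 - t1\<bar> * Bw \<ge> 2" and Bw: "Bw > 0" and K: "K \<ge> 2"
  shows "\<exists>c>0. \<forall>\<rho>>0. \<forall>a1 a2.
     integral {-Bw/2..Bw/2} (\<lambda>f. ln (1 + \<rho> * (cmod (a1 * cis (2*pi*f*t1) + a2 * cis (2*pi*f*t2)))\<^sup>2))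
      \<ge> Bw * (1 - 1/(4*real K)) * ((real K - 1)/real K) * ln (1 + \<rho> * c * max ((cmod a1)\<^sup>2) ((cmod a2)\<^sup>2))"
proof -
  define T where "T = t2 - t1"
  have T0: "T \<noteq> 0" using TB Bw by (auto simp: T_def)
  have Tpos: "\<bar>T\<bar> > 0" using T0 by simp
  define \<sigma> where "\<sigma> = 1/(2*real K^2*\<bar>T\<bar>)"
  obtain d where d: "d > 0" "d \<le> 2" and sep: "\<And>i j x. i < K \<Longrightarrow> j < K \<Longrightarrow> i \<noteq> j \<Longrightarrow>
     cmod (cis (2*pi*(x + real i * \<sigma>)*T) - cis (2*pi*(x + real j * \<sigma>)*T)) \<ge> d"
    using sep_exists[OF T0, of K] K unfolding \<sigma>_def by auto
  define c where "c = d\<^sup>2/16"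
  have c: "c > 0" using d by (simp add: c_def)
  have \<sigma>0: "\<sigma> \<ge> 0" unfolding \<sigma>_def by simp
  have K\<sigma>: "real K * \<sigma> = 1/(2*real K*\<bar>T\<bar>)" using K unfolding \<sigma>_def by (simp add: power2_eq_square)
  have invT: "1/\<bar>T\<bar> \<le> Bw/2" using TB Tpos unfolding T_def[symmetric] by (simp add: field_simps)
  have K\<sigma>B: "real K * \<sigma> \<le> Bw/(4*real K)"
  proof -
    have "real K * \<sigma> = (1/\<bar>T\<bar>) / (2*real K)" using K\<sigma> by simp
    also have "\<dots> \<le> (Bw/2)/(2*real K)" using invT K by (intro divide_right_mono) auto
    finally show ?thesis by simp
  qed
  show ?thesis
  proof (intro exI[of _ c] conjI c allI impI)
    fix \<rho> :: real and a1 a2 :: complex assume \<rho>: "\<rho> > 0"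
    define m where "m = max ((cmod a1)\<^sup>2) ((cmod a2)\<^sup>2)"
    define B where "B = ln (1 + \<rho> * c * m)"
    have m0: "m \<ge> 0" unfolding m_def by (simp add: le_max_iff_disj)
    have B0: "B \<ge> 0" unfolding B_def using \<rho> c m0 by (intro ln_ge_zero) simp
    define g where "g f = ln (1 + \<rho> * (cmod (a1 * cis (2*pi*f*t1) + a2 * cis (2*pi*f*t2)))\<^sup>2)" for f
    have g_alt: "g f = ln (1 + \<rho> * (cmod (a1 + a2 * cis (2*pi*f*T)))\<^sup>2)" for f
    proof -
      have "a1 * cis (2*pi*f*t1) + a2 * cis (2*pi*f*t2) = cis (2*pi*f*t1) * (a1 + a2 * cis (2*pi*f*T))"
        by (simp add: algebra_simps cis_mult T_def)
      then show ?thesis unfolding g_def by (simp add: norm_mult)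
    qed
    have gnn: "g x \<ge> 0" for x unfolding g_def using \<rho> by simp
    have gcont: "continuous_on UNIV g" unfolding g_def
      by (intro continuous_intros) (use \<rho> in \<open>auto simp: pos_arg_ne\<close>)
    have pt: "(\<Sum>j<K. g (x + real j * \<sigma>)) \<ge> (real K - 1) * B" for x
    proof -
      define z where "z j = cis (2*pi*(x + real j * \<sigma>)*T)" for j
      obtain j0 where j0: "\<And>j. j < K \<Longrightarrow> j \<noteq> j0 \<Longrightarrow> (cmod (a1 + a2 * z j))\<^sup>2 \<ge> c * m"
        using all_but_one[of z K d a1 a2] sep d unfolding z_def c_def m_def by auto
      have gz: "g (x + real j * \<sigma>) = ln (1 + \<rho> * (cmod (a1 + a2 * z j))\<^sup>2)" for j
        unfolding g_alt z_def by (simp add: algebra_simps)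
      have Bj: "g (x + real j * \<sigma>) \<ge> B" if "j < K" "j \<noteq> j0" for j
      proof -
        have A: "c * m \<le> (cmod (a1 + a2 * z j))\<^sup>2" using j0[OF that] .
        have p: "0 < 1 + \<rho> * c * m" using \<rho> c m0 by (simp add: add_pos_nonneg)
        have le: "\<rho> * c * m \<le> \<rho> * (cmod (a1 + a2 * z j))\<^sup>2"
          using A \<rho> by (simp add: mult.assoc mult_left_mono)
        show ?thesis unfolding gz B_def
          by (rule iffD2[OF ln_le_cancel_iff]) (use p le in linarith)+
      qed
      let ?S = "{..<K} - {j0}"
      have "(real K - 1) * B \<le> real (card ?S) * B"
      proof (intro mult_right_mono B0)
        have "card ?S \<ge> K - 1" using card_Diff_singleton_if[of "{..<K}" j0] by auto
        then show "real K - 1 \<le> real (card ?S)" using K by linarith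
      qed
      also have "\<dots> = (\<Sum>j\<in>?S. B)" by simp
      also have "\<dots> \<le> (\<Sum>j\<in>?S. g (x + real j * \<sigma>))" by (intro sum_mono Bj) auto
      also have "\<dots> \<le> (\<Sum>j<K. g (x + real j * \<sigma>))" by (intro sum_mono2) (auto simp: gnn)
      finally show ?thesis .
    qed
    have "Bw * 1 \<le> Bw * (4 * real K)" using Bw K by (intro mult_left_mono) auto
    then have "Bw/(4*real K) \<le> Bw" using K by (simp add: divide_le_eq)
    then have K\<sigma>Bw: "real K * \<sigma> \<le> Bw" using K\<sigma>B by linarith
    have main: "real K * integral {-Bw/2..Bw/2} g \<ge> (Bw/2 - (-Bw/2) - real K * \<sigma>) * ((real K - 1) * B)"
      by (rule shift_avg[OF gcont gnn \<sigma>0 _ pt]) (use K\<sigma>Bw in simp)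
    have "Bw * (1 - 1/(4*real K)) \<le> Bw/2 - (-Bw/2) - real K * \<sigma>"
      using K\<sigma>B by (simp add: field_simps)
    moreover have "(real K - 1) * B \<ge> 0" using K B0 by simp
    ultimately have "Bw * (1 - 1/(4*real K)) * ((real K - 1) * B) \<le> (Bw/2 - (-Bw/2) - real K * \<sigma>) * ((real K - 1) * B)"
      by (rule mult_right_mono)
    then have "Bw * (1 - 1/(4*real K)) * ((real K - 1) * B) \<le> real K * integral {-Bw/2..Bw/2} g"
      using main by linarith
    then have "Bw * (1 - 1/(4*real K)) * ((real K - 1) * B) / real K \<le> integral {-Bw/2..Bw/2} g"
      using K by (simp add: divide_le_eq mult.commute)
    then show "integral {-Bw/2..Bw/2} (\<lambda>f. ln (1 + \<rho> * (cmod (a1 * cis (2*pi*f*t1) + a2 * cis (2*pi*f*t2)))\<^sup>2))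
      \<ge> Bw * (1 - 1/(4*real K)) * ((real K - 1)/real K) * ln (1 + \<rho> * c * max ((cmod a1)\<^sup>2) ((cmod a2)\<^sup>2))"
    proof -
      have eq: "Bw * (1 - 1/(4*real K)) * ((real K - 1)/real K) * B = Bw * (1 - 1/(4*real K)) * ((real K - 1) * B) / real K"
        by simp
      show ?thesis unfolding g_def[symmetric] m_def[symmetric] B_def[symmetric] using eq \<open>_ \<le> integral {-Bw/2..Bw/2} g\<close> by linarith
    qed
  qed
qed



lemma cis_borel[measurable]: "cis \<in> borel_measurable borel"
  by (intro borel_measurable_continuous_onI) (simp add: cis_conv_exp continuous_intros)

lemma I_TDA_measurable:
  fixes \<alpha> :: "node \<Rightarrow> node \<Rightarrow> 'w \<Rightarrow> complex"
  assumes meas: "\<And>i j. (i,j)\<in>links \<Longrightarrow> \<alpha> i j \<in> borel_measurable M" and \<rho>: "rho0 snr \<ge> 0"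
  shows "(\<lambda>\<omega>. I_TDA Bw tau snr Rt (\<lambda>i j. \<alpha> i j \<omega>)) \<in> borel_measurable M"
proof -
  have [measurable]: "\<alpha> S R1 \<in> borel_measurable M" "\<alpha> S R2 \<in> borel_measurable M" "\<alpha> S D \<in> borel_measurable M"
     "\<alpha> R1 D \<in> borel_measurable M" "\<alpha> R2 D \<in> borel_measurable M"
    by (auto intro!: meas simp: links_def)
  define P where "P k \<omega> \<longleftrightarrow> Rt \<le> 1/2 * ln (1 + rho0 snr * (cmod (\<alpha> S k \<omega>))\<^sup>2)" for k \<omega>
  define b where "b k \<omega> = (if P k \<omega> then \<alpha> k D \<omega> else 0)" for k \<omega>
  have [measurable]: "b R1 \<in> borel_measurable M" "b R2 \<in> borel_measurable M"
    unfolding b_def P_def by measurable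
  define H where "H \<omega> f = ln (1 + rho0 snr * (cmod (b R1 \<omega> * cis (2*pi*f*tau R1) + b R2 \<omega> * cis (2*pi*f*tau R2)))\<^sup>2)" for \<omega> f
  have dec: "dec_set snr Rt (\<lambda>i j. \<alpha> i j \<omega>) = {k\<in>{R1,R2}. P k \<omega>}" for \<omega>
    by (simp add: dec_set_def P_def)
  have sumeq: "(\<Sum>k\<in>dec_set snr Rt (\<lambda>i j. \<alpha> i j \<omega>). \<alpha> k D \<omega> * cis (2*pi*f*tau k))
      = b R1 \<omega> * cis (2*pi*f*tau R1) + b R2 \<omega> * cis (2*pi*f*tau R2)" for \<omega> f
  proof -
    have st: "{k\<in>{R1,R2}. P k \<omega>} = (if P R1 \<omega> \<and> P R2 \<omega> then {R1,R2} else if P R1 \<omega> then {R1}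
       else if P R2 \<omega> then {R2} else {})" by auto
    show ?thesis unfolding dec st b_def by auto
  qed
  have Hcont: "continuous_on {-Bw/2..Bw/2} (H \<omega>)" for \<omega>
    unfolding H_def by (intro continuous_intros) (use \<rho> in \<open>auto simp: pos_arg_ne\<close>)
  have eq: "I_TDA Bw tau snr Rt (\<lambda>i j. \<alpha> i j \<omega>) = 1/2 * ln (1 + rho0 snr * (cmod (\<alpha> S D \<omega>))\<^sup>2)
      + 1/(2*Bw) * (\<integral>f. indicator {-Bw/2..Bw/2} f *\<^sub>R H \<omega> f \<partial>lborel)" for \<omega>
  proof -
    have "integral {-Bw/2..Bw/2} (H \<omega>) = (LINT f:{-Bw/2..Bw/2}|lborel. H \<omega> f)"
      using set_borel_integral_eq_integral(2)[OF borel_integrable_atLeastAtMost'[OF Hcont]] by simp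
    then show ?thesis unfolding I_TDA_def sumeq H_def[symmetric] set_lebesgue_integral_def by simp
  qed
  show ?thesis unfolding eq H_def by measurable
qed



lemma half_ln_ge_iff:
  fixes \<rho> x Rt :: real
  assumes \<rho>: "\<rho> > 0" and x: "x \<ge> 0"
  shows "(Rt \<le> 1/2 * ln (1 + \<rho> * x)) \<longleftrightarrow> (exp (2*Rt) - 1)/\<rho> \<le> x"
proof -
  have p: "0 < 1 + \<rho> * x" using \<rho> x by (auto intro!: add_pos_nonneg)
  have "(Rt \<le> 1/2 * ln (1 + \<rho> * x)) \<longleftrightarrow> 2*Rt \<le> ln (1 + \<rho> * x)" by linarith
  also have "\<dots> \<longleftrightarrow> exp (2*Rt) \<le> 1 + \<rho> * x" using p by (simp add: ln_ge_iff)
  also have "\<dots> \<longleftrightarrow> (exp (2*Rt) - 1)/\<rho> \<le> x" using \<rho> by (simp add: divide_le_eq mult.commute, linarith)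
  finally show ?thesis .
qed

lemma ln_lt_bound:
  fixes \<rho> x y :: real
  assumes \<rho>: "\<rho> > 0" and x: "x \<ge> 0" and l: "ln (1 + \<rho> * x) < y"
  shows "x < (exp y - 1)/\<rho>"
proof -
  have p: "0 < 1 + \<rho> * x" using \<rho> x by (auto intro!: add_pos_nonneg)
  have "1 + \<rho> * x < exp y" using l p by (metis exp_less_cancel_iff exp_ln)
  then show ?thesis using \<rho> by (simp add: less_divide_eq mult.commute)
qed

lemma dec_set_eq:
  assumes "rho0 snr > 0"
  shows "dec_set snr Rt a = {k\<in>{R1,R2}. (exp (2*Rt) - 1)/rho0 snr \<le> (cmod (a S k))\<^sup>2}"
  unfolding dec_set_def using half_ln_ge_iff[OF assms] by auto

lemma I_low:
  assumes \<rho>: "rho0 snr > 0"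
    and h: "(cmod (a S R1))\<^sup>2 < (exp (2*Rt) - 1)/rho0 snr" "(cmod (a S R2))\<^sup>2 < (exp (2*Rt) - 1)/rho0 snr"
       "(cmod (a S D))\<^sup>2 < (exp (2*Rt) - 1)/rho0 snr"
  shows "I_TDA Bw tau snr Rt a < Rt"
proof -
  have "dec_set snr Rt a = {}" unfolding dec_set_eq[OF \<rho>] using h by auto
  then have "I_TDA Bw tau snr Rt a = 1/2 * ln (1 + rho0 snr * (cmod (a S D))\<^sup>2)"
    unfolding I_TDA_def by simp
  also have "\<dots> < Rt" using half_ln_ge_iff[OF \<rho>, of "(cmod (a S D))\<^sup>2" Rt] h(3) by simp
  finally show ?thesis .
qed

lemma I_up:
  assumes \<rho>: "rho0 snr > 0" and Bw: "Bw > 0" and \<kappa>: "\<kappa> > 0" and c: "c > 0"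
    and Jb: "\<And>a1 a2. integral {-Bw/2..Bw/2} (\<lambda>f. ln (1 + rho0 snr * (cmod (a1 * cis (2*pi*f*tau R1) + a2 * cis (2*pi*f*tau R2)))\<^sup>2))
      \<ge> Bw * \<kappa> * ln (1 + rho0 snr * c * max ((cmod a1)\<^sup>2) ((cmod a2)\<^sup>2))"
    and I: "I_TDA Bw tau snr Rt a < Rt"
  defines "v \<equiv> (exp (2*Rt) - 1)/rho0 snr" and "w \<equiv> (exp (2*Rt/\<kappa>) - 1)/(rho0 snr * c)"
  shows "(cmod (a S D))\<^sup>2 < v \<and>
     (((cmod (a S R1))\<^sup>2 < v \<and> (cmod (a S R2))\<^sup>2 < v) \<or>
      ((cmod (a S R2))\<^sup>2 < v \<and> (cmod (a R1 D))\<^sup>2 < v) \<or>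
      ((cmod (a S R1))\<^sup>2 < v \<and> (cmod (a R2 D))\<^sup>2 < v) \<or>
      ((cmod (a R1 D))\<^sup>2 < w \<and> (cmod (a R2 D))\<^sup>2 < w))"
proof -
  let ?\<rho> = "rho0 snr"
  define G where "G = (\<lambda>f. ln (1 + ?\<rho> * (cmod (\<Sum>k\<in>dec_set snr Rt a. a k D * cis (2 * pi * f * tau k)))\<^sup>2))"
  define IG where "IG = integral {-Bw/2..Bw/2} G"
  have Idef: "I_TDA Bw tau snr Rt a = 1/2 * ln (1 + ?\<rho> * (cmod (a S D))\<^sup>2) + 1/(2*Bw) * IG"
    unfolding I_TDA_def IG_def G_def by simp
  have Gcont: "continuous_on {-Bw/2..Bw/2} G" unfolding G_def
    by (intro continuous_intros) (use \<rho> in \<open>auto simp: pos_arg_ne\<close>)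
  have IG0: "IG \<ge> 0" unfolding IG_def
    by (rule integral_nonneg[OF integrable_continuous_interval[OF Gcont]]) (use \<rho> in \<open>simp add: G_def\<close>)
  have first0: "0 \<le> 1/2 * ln (1 + ?\<rho> * (cmod (a S D))\<^sup>2)" using \<rho> by simp
  have IGR: "1/(2*Bw) * IG < Rt" using I first0 unfolding Idef by linarith
  have SD: "(cmod (a S D))\<^sup>2 < v"
  proof -
    have "1/(2*Bw) * IG \<ge> 0" using IG0 Bw by simp
    then have "1/2 * ln (1 + ?\<rho> * (cmod (a S D))\<^sup>2) < Rt" using I unfolding Idef by linarith
    then show ?thesis using half_ln_ge_iff[OF \<rho>, of "(cmod (a S D))\<^sup>2" Rt] unfolding v_def by simp
  qed
  have dec: "dec_set snr Rt a = {k\<in>{R1,R2}. v \<le> (cmod (a S k))\<^sup>2}" unfolding v_def by (rule dec_set_eq[OF \<rho>])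
  have single: "(cmod (a k D))\<^sup>2 < v" if "dec_set snr Rt a = {k}" for k
  proof -
    have "G = (\<lambda>f. ln (1 + ?\<rho> * (cmod (a k D))\<^sup>2))" unfolding G_def that by (simp add: norm_mult)
    then have "IG = Bw * ln (1 + ?\<rho> * (cmod (a k D))\<^sup>2)" unfolding IG_def using Bw by simp
    then have "1/2 * ln (1 + ?\<rho> * (cmod (a k D))\<^sup>2) < Rt" using IGR Bw by simp
    then show ?thesis using half_ln_ge_iff[OF \<rho>, of "(cmod (a k D))\<^sup>2" Rt] unfolding v_def by simp
  qed
  have both: "(cmod (a R1 D))\<^sup>2 < w \<and> (cmod (a R2 D))\<^sup>2 < w" if "dec_set snr Rt a = {R1, R2}"
  proof -
    define m where "m = max ((cmod (a R1 D))\<^sup>2) ((cmod (a R2 D))\<^sup>2)"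
    have m0: "m \<ge> 0" unfolding m_def by (simp add: le_max_iff_disj)
    have "G = (\<lambda>f. ln (1 + ?\<rho> * (cmod (a R1 D * cis (2*pi*f*tau R1) + a R2 D * cis (2*pi*f*tau R2)))\<^sup>2))"
      unfolding G_def that by simp
    then have "IG \<ge> Bw * \<kappa> * ln (1 + ?\<rho> * c * m)" unfolding IG_def m_def using Jb by simp
    then have "1/(2*Bw) * (Bw * \<kappa> * ln (1 + ?\<rho> * c * m)) \<le> 1/(2*Bw) * IG" using Bw
      by (intro mult_left_mono) auto
    then have "1/(2*Bw) * (Bw * \<kappa> * ln (1 + ?\<rho> * c * m)) < Rt" using IGR by linarith
    then have "\<kappa> * ln (1 + ?\<rho> * c * m) < 2 * Rt" using Bw by (simp add: field_simps)
    then have "ln (1 + (?\<rho> * c) * m) < 2 * Rt / \<kappa>" using \<kappa> by (simp add: field_simps)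
    then have "m < w" unfolding w_def using \<rho> c m0 by (intro ln_lt_bound) auto
    then show ?thesis unfolding m_def by simp
  qed
  have memb: "(k \<in> dec_set snr Rt a) = (v \<le> (cmod (a S k))\<^sup>2)" if "k \<in> {R1,R2}" for k
    using that unfolding dec by blast
  have m1: "(R1 \<in> dec_set snr Rt a) = (v \<le> (cmod (a S R1))\<^sup>2)" by (rule memb) simp
  have m2: "(R2 \<in> dec_set snr Rt a) = (v \<le> (cmod (a S R2))\<^sup>2)" by (rule memb) simp
  have cases: "dec_set snr Rt a = {} \<or> dec_set snr Rt a = {R1} \<or> dec_set snr Rt a = {R2} \<or> dec_set snr Rt a = {R1,R2}"
  proof -
    have sub: "dec_set snr Rt a \<subseteq> {R1,R2}" unfolding dec by blast
    have "Pow {R1,R2} = {{}, {R1}, {R2}, {R1,R2}}" by (auto simp: Pow_insert)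
    then show ?thesis using sub by (metis PowI empty_iff insert_iff)
  qed
  show ?thesis
  proof (intro conjI SD)
    show "((cmod (a S R1))\<^sup>2 < v \<and> (cmod (a S R2))\<^sup>2 < v) \<or>
      ((cmod (a S R2))\<^sup>2 < v \<and> (cmod (a R1 D))\<^sup>2 < v) \<or>
      ((cmod (a S R1))\<^sup>2 < v \<and> (cmod (a R2 D))\<^sup>2 < v) \<or>
      ((cmod (a R1 D))\<^sup>2 < w \<and> (cmod (a R2 D))\<^sup>2 < w)"
      using cases
    proof (elim disjE)
      assume e: "dec_set snr Rt a = {}"
      then have "R1 \<notin> dec_set snr Rt a" "R2 \<notin> dec_set snr Rt a" by auto
      then show ?thesis unfolding m1 m2 by (simp add: not_le)
    next
      assume e: "dec_set snr Rt a = {R1}"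
      then have "R2 \<notin> dec_set snr Rt a" by auto
      then have "(cmod (a S R2))\<^sup>2 < v" unfolding m2 by (simp add: not_le)
      then show ?thesis using single[OF e] by auto
    next
      assume e: "dec_set snr Rt a = {R2}"
      then have "R1 \<notin> dec_set snr Rt a" by auto
      then have "(cmod (a S R1))\<^sup>2 < v" unfolding m1 by (simp add: not_le)
      then show ?thesis using single[OF e] by auto
    next
      assume e: "dec_set snr Rt a = {R1,R2}"
      then show ?thesis using both by auto
    qed
  qed
qed



definition ev :: "'w measure \<Rightarrow> (node \<Rightarrow> node \<Rightarrow> 'w \<Rightarrow> complex) \<Rightarrow> node \<times> node \<Rightarrow> real \<Rightarrow> 'w set" where
  "ev M \<alpha> l t = {\<omega>\<in>space M. (cmod (\<alpha> (fst l) (snd l) \<omega>))\<^sup>2 < t}"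

lemma indep3:
  fixes \<alpha> :: "node \<Rightarrow> node \<Rightarrow> 'w \<Rightarrow> complex"
  assumes M: "prob_space M" and ind: "prob_space.indep_vars M (\<lambda>_. borel) (\<lambda>p. \<alpha> (fst p) (snd p)) links"
    and l: "l1 \<in> links" "l2 \<in> links" "l3 \<in> links" "l1 \<noteq> l2" "l1 \<noteq> l3" "l2 \<noteq> l3"
  shows "measure M (ev M \<alpha> l1 t1 \<inter> ev M \<alpha> l2 t2 \<inter> ev M \<alpha> l3 t3)
       = measure M (ev M \<alpha> l1 t1) * measure M (ev M \<alpha> l2 t2) * measure M (ev M \<alpha> l3 t3)"
proof -
  interpret prob_space M by fact
  define X where "X p = \<alpha> (fst p) (snd p)" for p
  define A where "A t = {z::complex. (cmod z)\<^sup>2 < t}" for t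
  have Ab: "A t \<in> sets borel" for t
  proof -
    have "open (A t)" unfolding A_def by (intro open_Collect_less continuous_intros)
    then show ?thesis by simp
  qed
  define T where "T p = (if p = l1 then t1 else if p = l2 then t2 else t3)" for p
  have evX: "ev M \<alpha> p t = X p -` A t \<inter> space M" for p t
    unfolding ev_def X_def A_def by auto
  have ind': "indep_vars (\<lambda>_. borel) X links" using ind unfolding X_def by simp
  have "prob (\<Inter>p\<in>{l1,l2,l3}. X p -` A (T p) \<inter> space M) = (\<Prod>p\<in>{l1,l2,l3}. prob (X p -` A (T p) \<inter> space M))"
    by (rule indep_varsD[OF ind']) (auto simp: l Ab)
  moreover have "T l1 = t1" "T l2 = t2" "T l3 = t3" using l by (auto simp: T_def)
  ultimately show ?thesis using l by (simp add: evX Int_assoc mult.assoc)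
qed


lemma asym_ln:
  fixes q Cc \<sigma> :: real
  assumes "q > 0" "Cc > 0" "\<sigma> > 0"
  shows "((\<lambda>x. ln (((1 + x*\<sigma>) powr q - 1)/(Cc*x)) / ln x) \<longlongrightarrow> q - 1) at_top"
  using assms by real_asymp

lemma asym_0:
  fixes q Cc \<sigma> :: real
  assumes "q > 0" "q < 1" "Cc > 0" "\<sigma> > 0"
  shows "((\<lambda>x. ((1 + x*\<sigma>) powr q - 1)/(Cc*x)) \<longlongrightarrow> 0) at_top"
  using assms by real_asymp

lemma asym_kappa: "((\<lambda>K::nat. 1/((1 - 1/(4*real K)) * ((real K - 1)/real K))) \<longlongrightarrow> 1) at_top"
  by real_asymp

lemma asym_c: "((\<lambda>x::real. C / ln x) \<longlongrightarrow> 0) at_top"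
  by real_asymp

lemma exp_rate: 
  fixes r \<sigma> snr q :: real
  assumes "snr > 0" "\<sigma> > 0"
  shows "exp (q * (r * ln (1 + snr * \<sigma>))) = (1 + snr*\<sigma>) powr (q*r)"
proof -
  have "1 + snr * \<sigma> > 0" using assms by (simp add: add_pos_pos)
  then show ?thesis by (simp add: powr_def mult.assoc)
qed





theorem theorem3:
  fixes M :: "'w measure"
    and \<alpha> :: "node \<Rightarrow> node \<Rightarrow> 'w \<Rightarrow> complex"
    and s2 :: "node \<Rightarrow> node \<Rightarrow> real"
    and Bw r :: real
    and tau :: "node \<Rightarrow> real"
  assumes "prob_space M"
    and "prob_space.indep_vars M (\<lambda>_. borel) (\<lambda>p. \<alpha> (fst p) (snd p)) links"
    and "\<forall>(i,j)\<in>links. s2 i j > 0"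
    and "\<forall>(i,j)\<in>links. distributed M lborel (\<alpha> i j)
                          (\<lambda>z. ennreal (cgauss_density (s2 i j) z))"
    and "Bw > 0"
    and "0 < r" and "r < 1/2"
    and "\<bar>tau R2 - tau R1\<bar> * Bw \<ge> 2"
  shows "((\<lambda>snr. - ln (outage_TDA M \<alpha> s2 Bw tau r snr) / ln snr)
           \<longlongrightarrow> 3 * (1 - 2 * r)) at_top"
proof -
  note Mp = assms(1) and ind = assms(2) and Bw = assms(5) and r0 = assms(6) and r1 = assms(7)
    and TB = assms(8)
  interpret P: prob_space M by (rule Mp)
  have spos: "s2 i j > 0" if "(i,j) \<in> links" for i j using assms(3) that by auto
  have dist: "distributed M lborel (\<alpha> i j) (\<lambda>z. ennreal (cgauss_density (s2 i j) z))"
    if "(i,j) \<in> links" for i j using assms(4) that by auto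
  have meas: "\<alpha> i j \<in> borel_measurable M" if "(i,j) \<in> links" for i j
    using distributed_measurable[OF dist[OF that]] by simp
  define L5 where "L5 = {(S,D), (S,R1), (S,R2), (R1,D), (R2,D)}"
  have L5l: "L5 \<subseteq> links" unfolding L5_def links_def by auto
  have L5f: "finite L5" unfolding L5_def by simp
  define sl where "sl l = s2 (fst l) (snd l)" for l
  define smin where "smin = Min (sl ` L5)"
  define smax where "smax = Max (sl ` L5)"
  have slpos: "sl l > 0" if "l \<in> links" for l using spos[of "fst l" "snd l"] that by (simp add: sl_def)
  have sminpos: "smin > 0" unfolding smin_def using L5f L5l slpos by (subst Min_gr_iff) (auto simp: L5_def)
  have smin_le: "smin \<le> sl l" if "l \<in> L5" for l unfolding smin_def using L5f that by simp
  have smax_ge: "sl l \<le> smax" if "l \<in> L5" for l unfolding smax_def using L5f that by simp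
  have smaxpos: "smax > 0" using smax_ge[of "(S,D)"] slpos[of "(S,D)"] by (simp add: L5_def links_def)
  have ev_sets: "ev M \<alpha> l t \<in> sets M" if "l \<in> L5" "0 \<le> t" for l t
  proof -
    have "l \<in> links" using that L5l by auto
    then show ?thesis unfolding ev_def
      using gauss_bounds(1)[OF Mp dist[of "fst l" "snd l"] spos[of "fst l" "snd l"] that(2)] by simp
  qed
  have ev_up: "measure M (ev M \<alpha> l t) \<le> t / smin" if "l \<in> L5" "0 \<le> t" for l t
  proof -
    have l: "l \<in> links" using that L5l by auto
    have "measure M (ev M \<alpha> l t) \<le> t / sl l" unfolding ev_def sl_def
      using gauss_bounds(2)[OF Mp dist[of "fst l" "snd l"] spos[of "fst l" "snd l"] that(2)] l by simp
    also have "\<dots> \<le> t / smin" using that sminpos smin_le[OF that(1)] by (intro divide_left_mono) auto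
    finally show ?thesis .
  qed
  have ev_low: "measure M (ev M \<alpha> l t) \<ge> t / (exp 1 * smax)" if "l \<in> L5" "0 \<le> t" "t \<le> smin" for l t
  proof -
    have l: "l \<in> links" using that L5l by auto
    have "t \<le> sl l" using that smin_le[OF that(1)] by linarith
    then have "measure M (ev M \<alpha> l t) \<ge> t / (exp 1 * sl l)" unfolding ev_def sl_def
      using gauss_bounds(3)[OF Mp dist[of "fst l" "snd l"] spos[of "fst l" "snd l"] that(2)] l by (simp add: sl_def)
    moreover have "t / (exp 1 * smax) \<le> t / (exp 1 * sl l)"
      using that slpos[OF l] smax_ge[OF that(1)] by (intro divide_left_mono mult_left_mono mult_pos_pos) auto
    ultimately show ?thesis by linarith
  qed
  have inL5: "(S,D) \<in> L5" "(S,R1) \<in> L5" "(S,R2) \<in> L5" "(R1,D) \<in> L5" "(R2,D) \<in> L5" by (auto simp: L5_def)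
  have inl: "(S,D) \<in> links" "(S,R1) \<in> links" "(S,R2) \<in> links" "(R1,D) \<in> links" "(R2,D) \<in> links"
    using inL5 L5l by auto
  define \<sigma> where "\<sigma> = s2 S D"
  have \<sigma>: "\<sigma> > 0" using spos[OF inl(1)] by (simp add: \<sigma>_def)
  define Rt where "Rt snr = target_rate r \<sigma> snr" for snr
  define v where "v snr = (exp (2 * Rt snr) - 1) / rho0 snr" for snr
  define Out where "Out snr = {\<omega>\<in>space M. I_TDA Bw tau snr (Rt snr) (\<lambda>i j. \<alpha> i j \<omega>) < Rt snr}" for snr
  have Pdef: "outage_TDA M \<alpha> s2 Bw tau r snr = measure M (Out snr)" for snr
    unfolding outage_TDA_def Out_def Rt_def \<sigma>_def by simp
  have Rtpos: "Rt snr > 0" if "snr > 0" for snr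
    unfolding Rt_def target_rate_def using that \<sigma> r0 by (intro mult_pos_pos ln_gt_zero) auto
  have v_alt: "v snr = ((1 + snr*\<sigma>) powr (2*r) - 1)/((2/3)* snr)" if "snr > 0" for snr
    unfolding v_def Rt_def target_rate_def rho0_def using exp_rate[OF that \<sigma>, of 2 r] by simp
  have vlim: "(v \<longlongrightarrow> 0) at_top"
  proof -
    have "((\<lambda>x. ((1 + x*\<sigma>) powr (2*r) - 1)/((2/3)*x)) \<longlongrightarrow> 0) at_top"
      using asym_0[of "2*r" "2/3" \<sigma>] r0 r1 \<sigma> by simp
    moreover have "eventually (\<lambda>x. ((1 + x*\<sigma>) powr (2*r) - 1)/((2/3)*x) = v x) at_top"
      using eventually_gt_at_top[of 0] by eventually_elim (simp add: v_alt)
    ultimately show ?thesis by (rule Lim_transform_eventually)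
  qed
  have lnvlim: "((\<lambda>x. ln (v x) / ln x) \<longlongrightarrow> 2*r - 1) at_top"
  proof -
    have "((\<lambda>x. ln (((1 + x*\<sigma>) powr (2*r) - 1)/((2/3)*x)) / ln x) \<longlongrightarrow> 2*r - 1) at_top"
      using asym_ln[of "2*r" "2/3" \<sigma>] r0 \<sigma> by simp
    moreover have "eventually (\<lambda>x. ln (((1 + x*\<sigma>) powr (2*r) - 1)/((2/3)*x)) / ln x = ln (v x) / ln x) at_top"
      using eventually_gt_at_top[of 0] by eventually_elim (simp add: v_alt)
    ultimately show ?thesis by (rule Lim_transform_eventually)
  qed
  define good where "good snr \<longleftrightarrow> 1 < snr \<and> 0 < v snr \<and> v snr \<le> smin" for snr
  have evgood: "eventually good at_top"
  proof -
    have "eventually (\<lambda>x. v x < smin) at_top" using order_tendstoD(2)[OF vlim sminpos] .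
    moreover have "eventually (\<lambda>x::real. 1 < x) at_top" by (rule eventually_gt_at_top)
    ultimately show ?thesis
    proof eventually_elim
      case (elim x)
      have "rho0 x > 0" using elim by (simp add: rho0_def)
      moreover have "exp (2 * Rt x) > 1" using Rtpos[of x] elim by simp
      ultimately have "v x > 0" unfolding v_def by simp
      then show ?case using elim unfolding good_def by simp
    qed
  qed
  have \<rho>pos: "rho0 snr > 0" if "good snr" for snr using that by (simp add: good_def rho0_def)
  have Fm: "(\<lambda>\<omega>. I_TDA Bw tau snr (Rt snr) (\<lambda>i j. \<alpha> i j \<omega>)) \<in> borel_measurable M" if "good snr" for snr
    by (rule I_TDA_measurable[OF meas]) (use \<rho>pos[OF that] in auto)
  have Osets: "Out snr \<in> sets M" if "good snr" for snr
  proof -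
    note Fm[OF that, measurable]
    show ?thesis unfolding Out_def by measurable
  qed
  have Plow: "measure M (Out snr) \<ge> (v snr / (exp 1 * smax))^3" if g: "good snr" for snr
  proof -
    let ?v = "v snr"
    have v0: "0 \<le> ?v" "?v \<le> smin" using g by (auto simp: good_def)
    have sub: "ev M \<alpha> (S,D) ?v \<inter> ev M \<alpha> (S,R1) ?v \<inter> ev M \<alpha> (S,R2) ?v \<subseteq> Out snr"
      unfolding Out_def ev_def
      by (auto intro!: I_low[OF \<rho>pos[OF g]] simp: v_def)
    have "(?v / (exp 1 * smax))^3 = (?v / (exp 1 * smax)) * (?v / (exp 1 * smax)) * (?v / (exp 1 * smax))"
      by (simp add: power3_eq_cube)
    also have "\<dots> \<le> measure M (ev M \<alpha> (S,D) ?v) * measure M (ev M \<alpha> (S,R1) ?v) * measure M (ev M \<alpha> (S,R2) ?v)"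
      using ev_low[OF inL5(1) v0] ev_low[OF inL5(2) v0] ev_low[OF inL5(3) v0] v0 smaxpos
      by (intro mult_mono) auto
    also have "\<dots> = measure M (ev M \<alpha> (S,D) ?v \<inter> ev M \<alpha> (S,R1) ?v \<inter> ev M \<alpha> (S,R2) ?v)"
      by (rule indep3[OF Mp ind, symmetric]) (use inl in auto)
    also have "\<dots> \<le> measure M (Out snr)" by (rule P.finite_measure_mono[OF sub Osets[OF g]])
    finally show ?thesis .
  qed
  have Pup: "\<exists>c>0. c \<le> 1 \<and> (\<forall>snr. good snr \<longrightarrow> measure M (Out snr) \<le>
      4 * v snr * ((exp (2 * Rt snr / ((1 - 1/(4*real K)) * ((real K - 1)/real K))) - 1)/(rho0 snr * c))^2 / smin^3)"
    if K: "K \<ge> 2" for K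
  proof -
    define \<kappa> where "\<kappa> = (1 - 1/(4*real K)) * ((real K - 1)/real K)"
    have \<kappa>0: "\<kappa> > 0" unfolding \<kappa>_def using K by (intro mult_pos_pos) auto
    have \<kappa>1: "\<kappa> \<le> 1" unfolding \<kappa>_def using K by (intro mult_le_one) auto
    obtain c0 where c0: "c0 > 0" and Jl: "\<And>\<rho> a1 a2. \<rho> > 0 \<Longrightarrow>
     integral {-Bw/2..Bw/2} (\<lambda>f. ln (1 + \<rho> * (cmod (a1 * cis (2*pi*f*tau R1) + a2 * cis (2*pi*f*tau R2)))\<^sup>2))
      \<ge> Bw * (1 - 1/(4*real K)) * ((real K - 1)/real K) * ln (1 + \<rho> * c0 * max ((cmod a1)\<^sup>2) ((cmod a2)\<^sup>2))"
      using J_lower[OF TB Bw K] by blast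
    define c where "c = min c0 1"
    have c: "c > 0" "c \<le> 1" using c0 by (auto simp: c_def)
    have Jb: "integral {-Bw/2..Bw/2} (\<lambda>f. ln (1 + rho0 snr * (cmod (a1 * cis (2*pi*f*tau R1) + a2 * cis (2*pi*f*tau R2)))\<^sup>2))
      \<ge> Bw * \<kappa> * ln (1 + rho0 snr * c * max ((cmod a1)\<^sup>2) ((cmod a2)\<^sup>2))" if g: "good snr" for snr a1 a2
    proof -
      have m0: "0 \<le> max ((cmod a1)\<^sup>2) ((cmod a2)\<^sup>2)" by (simp add: le_max_iff_disj)
      have "rho0 snr * c * max ((cmod a1)\<^sup>2) ((cmod a2)\<^sup>2) \<le> rho0 snr * c0 * max ((cmod a1)\<^sup>2) ((cmod a2)\<^sup>2)"
        using \<rho>pos[OF g] m0 by (intro mult_right_mono mult_left_mono) (auto simp: c_def)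
      moreover have "0 \<le> rho0 snr * c * max ((cmod a1)\<^sup>2) ((cmod a2)\<^sup>2)" using \<rho>pos[OF g] m0 c by simp
      ultimately have "ln (1 + rho0 snr * c * max ((cmod a1)\<^sup>2) ((cmod a2)\<^sup>2)) \<le> ln (1 + rho0 snr * c0 * max ((cmod a1)\<^sup>2) ((cmod a2)\<^sup>2))"
        by (subst ln_le_cancel_iff) auto
      then have "Bw * \<kappa> * ln (1 + rho0 snr * c * max ((cmod a1)\<^sup>2) ((cmod a2)\<^sup>2)) \<le> Bw * \<kappa> * ln (1 + rho0 snr * c0 * max ((cmod a1)\<^sup>2) ((cmod a2)\<^sup>2))"
        using Bw \<kappa>0 by (intro mult_left_mono) auto
      also have "\<dots> \<le> integral {-Bw/2..Bw/2} (\<lambda>f. ln (1 + rho0 snr * (cmod (a1 * cis (2*pi*f*tau R1) + a2 * cis (2*pi*f*tau R2)))\<^sup>2))" using Jl[OF \<rho>pos[OF g], of a1 a2] unfolding \<kappa>_def by simp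
      finally show ?thesis .
    qed
    show ?thesis
    proof (intro exI[of _ c] conjI c allI impI)
      fix snr assume g: "good snr"
      let ?v = "v snr"
      define w where "w = (exp (2 * Rt snr / \<kappa>) - 1)/(rho0 snr * c)"
      have v0: "0 \<le> ?v" using g by (simp add: good_def)
      have vw: "?v \<le> w"
      proof -
        have R0: "0 \<le> Rt snr" using Rtpos[of snr] g by (simp add: good_def)
        have "2 * Rt snr \<le> 2 * Rt snr / \<kappa>" using R0 \<kappa>0 \<kappa>1 by (simp add: le_divide_eq mult_left_le)
        then have e: "exp (2 * Rt snr) - 1 \<le> exp (2 * Rt snr / \<kappa>) - 1" by simp
        have e0: "0 \<le> exp (2 * Rt snr) - 1" using R0 by simp
        have "?v = (exp (2 * Rt snr) - 1) / rho0 snr" by (simp add: v_def)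
        also have "\<dots> \<le> (exp (2 * Rt snr) - 1) / (rho0 snr * c)"
          using \<rho>pos[OF g] c e0 by (intro divide_left_mono) (auto intro: mult_pos_pos simp: mult_le_cancel_left1)
        also have "\<dots> \<le> w" unfolding w_def using e \<rho>pos[OF g] c by (intro divide_right_mono) auto
        finally show ?thesis .
      qed
      have w0: "0 \<le> w" using v0 vw by linarith
      define G1 where "G1 = ev M \<alpha> (S,D) ?v \<inter> ev M \<alpha> (S,R1) ?v \<inter> ev M \<alpha> (S,R2) ?v"
      define G2 where "G2 = ev M \<alpha> (S,D) ?v \<inter> ev M \<alpha> (S,R2) ?v \<inter> ev M \<alpha> (R1,D) ?v"
      define G3 where "G3 = ev M \<alpha> (S,D) ?v \<inter> ev M \<alpha> (S,R1) ?v \<inter> ev M \<alpha> (R2,D) ?v"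
      define G4 where "G4 = ev M \<alpha> (S,D) ?v \<inter> ev M \<alpha> (R1,D) w \<inter> ev M \<alpha> (R2,D) w"
      have sub: "Out snr \<subseteq> G1 \<union> G2 \<union> G3 \<union> G4"
      proof
        fix \<omega> assume "\<omega> \<in> Out snr"
        then have om: "\<omega> \<in> space M" and I: "I_TDA Bw tau snr (Rt snr) (\<lambda>i j. \<alpha> i j \<omega>) < Rt snr"
          unfolding Out_def by auto
        have "(cmod (\<alpha> S D \<omega>))\<^sup>2 < ?v \<and>
           (((cmod (\<alpha> S R1 \<omega>))\<^sup>2 < ?v \<and> (cmod (\<alpha> S R2 \<omega>))\<^sup>2 < ?v) \<or>
            ((cmod (\<alpha> S R2 \<omega>))\<^sup>2 < ?v \<and> (cmod (\<alpha> R1 D \<omega>))\<^sup>2 < ?v) \<or>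
            ((cmod (\<alpha> S R1 \<omega>))\<^sup>2 < ?v \<and> (cmod (\<alpha> R2 D \<omega>))\<^sup>2 < ?v) \<or>
            ((cmod (\<alpha> R1 D \<omega>))\<^sup>2 < w \<and> (cmod (\<alpha> R2 D \<omega>))\<^sup>2 < w))"
          using I_up[OF \<rho>pos[OF g] Bw \<kappa>0 c(1) Jb[OF g] I] unfolding v_def w_def by simp
        then show "\<omega> \<in> G1 \<union> G2 \<union> G3 \<union> G4" using om unfolding G1_def G2_def G3_def G4_def ev_def by auto
      qed
      have evs: "ev M \<alpha> l t \<in> sets M" if "l \<in> L5" "0 \<le> t" for l t using ev_sets that .
      have Gs: "G1 \<in> sets M" "G2 \<in> sets M" "G3 \<in> sets M" "G4 \<in> sets M"
        unfolding G1_def G2_def G3_def G4_def using evs inL5 v0 w0 by (auto intro!: sets.Int)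
      have prod_bound: "measure M (ev M \<alpha> l1 t1) * measure M (ev M \<alpha> l2 t2) * measure M (ev M \<alpha> l3 t3)
          \<le> (t1/smin) * (t2/smin) * (t3/smin)"
        if "l1 \<in> L5" "l2 \<in> L5" "l3 \<in> L5" "0 \<le> t1" "0 \<le> t2" "0 \<le> t3" for l1 l2 l3 t1 t2 t3
        using ev_up[OF that(1,4)] ev_up[OF that(2,5)] ev_up[OF that(3,6)] that(4-6) sminpos
        by (intro mult_mono) (auto intro: measure_nonneg mult_nonneg_nonneg)
      have b1: "measure M G1 \<le> (?v/smin)^3"
      proof -
        have "measure M G1 = measure M (ev M \<alpha> (S,D) ?v) * measure M (ev M \<alpha> (S,R1) ?v) * measure M (ev M \<alpha> (S,R2) ?v)"
          unfolding G1_def by (rule indep3[OF Mp ind]) (use inl in auto)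
        also have "\<dots> \<le> (?v/smin) * (?v/smin) * (?v/smin)" by (rule prod_bound) (use inL5 v0 in auto)
        finally show ?thesis by (simp add: power3_eq_cube)
      qed
      have b2: "measure M G2 \<le> (?v/smin)^3"
      proof -
        have "measure M G2 = measure M (ev M \<alpha> (S,D) ?v) * measure M (ev M \<alpha> (S,R2) ?v) * measure M (ev M \<alpha> (R1,D) ?v)"
          unfolding G2_def by (rule indep3[OF Mp ind]) (use inl in auto)
        also have "\<dots> \<le> (?v/smin) * (?v/smin) * (?v/smin)" by (rule prod_bound) (use inL5 v0 in auto)
        finally show ?thesis by (simp add: power3_eq_cube)
      qed
      have b3: "measure M G3 \<le> (?v/smin)^3"
      proof -
        have "measure M G3 = measure M (ev M \<alpha> (S,D) ?v) * measure M (ev M \<alpha> (S,R1) ?v) * measure M (ev M \<alpha> (R2,D) ?v)"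
          unfolding G3_def by (rule indep3[OF Mp ind]) (use inl in auto)
        also have "\<dots> \<le> (?v/smin) * (?v/smin) * (?v/smin)" by (rule prod_bound) (use inL5 v0 in auto)
        finally show ?thesis by (simp add: power3_eq_cube)
      qed
      have b4: "measure M G4 \<le> (?v/smin) * (w/smin) * (w/smin)"
      proof -
        have "measure M G4 = measure M (ev M \<alpha> (S,D) ?v) * measure M (ev M \<alpha> (R1,D) w) * measure M (ev M \<alpha> (R2,D) w)"
          unfolding G4_def by (rule indep3[OF Mp ind]) (use inl in auto)
        also have "\<dots> \<le> (?v/smin) * (w/smin) * (w/smin)" by (rule prod_bound) (use inL5 v0 w0 in auto)
        finally show ?thesis .
      qed
      have "measure M (Out snr) \<le> measure M (G1 \<union> G2 \<union> G3 \<union> G4)"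
        by (rule P.finite_measure_mono[OF sub]) (use Gs in auto)
      also have "\<dots> \<le> measure M (G1 \<union> G2 \<union> G3) + measure M G4"
        by (rule measure_Un_le) (use Gs in auto)
      also have "\<dots> \<le> measure M (G1 \<union> G2) + measure M G3 + measure M G4"
        using measure_Un_le[of "G1 \<union> G2" M G3] Gs by auto
      also have "\<dots> \<le> measure M G1 + measure M G2 + measure M G3 + measure M G4"
        using measure_Un_le[of G1 M G2] Gs by auto
      also have "\<dots> \<le> 3 * (?v/smin)^3 + (?v/smin) * (w/smin) * (w/smin)" using b1 b2 b3 b4 by linarith
      also have "\<dots> \<le> 4 * ?v * w^2 / smin^3"
      proof -
        have "(?v/smin)^3 \<le> (?v/smin) * (w/smin) * (w/smin)"
        proof -
          have a: "?v/smin \<le> w/smin" using vw sminpos by (simp add: divide_right_mono)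
          have b: "0 \<le> ?v/smin" using v0 sminpos by simp
          have "(?v/smin)^3 = (?v/smin) * ((?v/smin) * (?v/smin))" by (simp add: power3_eq_cube)
          also have "\<dots> \<le> (?v/smin) * ((w/smin) * (w/smin))" using a b by (intro mult_left_mono mult_mono) auto
          finally show ?thesis by (simp add: mult.assoc)
        qed
        moreover have "(?v/smin) * (w/smin) * (w/smin) = ?v * w^2 / smin^3"
          by (simp add: power2_eq_square power3_eq_cube)
        ultimately show ?thesis by linarith
      qed
      finally show "measure M (Out snr) \<le> 4 * ?v * ((exp (2 * Rt snr / ((1 - 1/(4*real K)) * ((real K - 1)/real K))) - 1)/(rho0 snr * c))^2 / smin^3"
        unfolding w_def \<kappa>_def .
    qed
  qed
  define f where "f snr = - ln (outage_TDA M \<alpha> s2 Bw tau r snr) / ln snr" for snr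
  have Ppos: "measure M (Out snr) > 0" if g: "good snr" for snr
  proof -
    have "0 < (v snr / (exp 1 * smax))^3" using g smaxpos by (simp add: good_def)
    then show ?thesis using Plow[OF g] by linarith
  qed
  have fU: "f snr \<le> -3 * (ln (v snr) / ln snr) + 3 * ln (exp 1 * smax) / ln snr" if g: "good snr" for snr
  proof -
    have v0: "v snr > 0" and s1: "snr > 1" using g by (auto simp: good_def)
    have B0: "0 < v snr / (exp 1 * smax)" using v0 smaxpos by simp
    have "ln ((v snr / (exp 1 * smax))^3) \<le> ln (measure M (Out snr))"
      using Plow[OF g] B0 Ppos[OF g] by (subst ln_le_cancel_iff) auto
    moreover have "ln ((v snr / (exp 1 * smax))^3) = 3 * (ln (v snr) - ln (exp 1 * smax))"
      using B0 v0 smaxpos by (simp add: ln_realpow ln_div)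
    moreover have "3 * (ln (v snr) - ln (exp 1 * smax)) = 3 * ln (v snr) - 3 * ln (exp 1 * smax)"
      by (simp add: right_diff_distrib)
    ultimately have "- ln (measure M (Out snr)) \<le> -3 * ln (v snr) + 3 * ln (exp 1 * smax)" by linarith
    then have "- ln (measure M (Out snr)) / ln snr \<le> (-3 * ln (v snr) + 3 * ln (exp 1 * smax)) / ln snr"
      using s1 by (intro divide_right_mono) auto
    then show ?thesis unfolding f_def Pdef by (simp add: add_divide_distrib diff_divide_distrib)
  qed
  show ?thesis unfolding f_def[symmetric]
  proof (rule order_tendstoI)
    fix a assume a: "3 * (1 - 2 * r) < a"
    have "((\<lambda>x. -3 * (ln (v x) / ln x) + 3 * ln (exp 1 * smax) / ln x) \<longlongrightarrow> -3 * (2*r - 1) + 0) at_top"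
      by (intro tendsto_intros lnvlim asym_c)
    moreover have "-3 * (2*r - 1) + 0 < a" using a by simp
    ultimately have "eventually (\<lambda>x. -3 * (ln (v x) / ln x) + 3 * ln (exp 1 * smax) / ln x < a) at_top"
      by (rule order_tendstoD(2))
    then show "eventually (\<lambda>x. f x < a) at_top" using evgood
      by eventually_elim (use fU in force)
  next
    fix a assume a: "a < 3 * (1 - 2 * r)"
    define \<delta> where "\<delta> = (3 * (1 - 2 * r) - a) / (8 * r)"
    have \<delta>: "\<delta> > 0" using a r0 by (simp add: \<delta>_def)
    have "eventually (\<lambda>K::nat. 1/((1 - 1/(4*real K)) * ((real K - 1)/real K)) < 1 + \<delta>) at_top"
      using order_tendstoD(2)[OF asym_kappa] \<delta> by simp
    moreover have "eventually (\<lambda>K::nat. 2 \<le> K) at_top" by (rule eventually_ge_at_top)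
    ultimately have "eventually (\<lambda>K::nat. 1/((1 - 1/(4*real K)) * ((real K - 1)/real K)) < 1 + \<delta> \<and> 2 \<le> K) at_top"
      by eventually_elim auto
    then obtain K :: nat where K: "1/((1 - 1/(4*real K)) * ((real K - 1)/real K)) < 1 + \<delta>" "2 \<le> K"
      by (metis (mono_tags, lifting) eventually_sequentially order_refl)
    define \<kappa> where "\<kappa> = (1 - 1/(4*real K)) * ((real K - 1)/real K)"
    have \<kappa>0: "\<kappa> > 0" unfolding \<kappa>_def using K by (intro mult_pos_pos) auto
    have \<kappa>\<delta>: "1/\<kappa> < 1 + \<delta>" using K unfolding \<kappa>_def by simp
    obtain c where c: "c > 0" "c \<le> 1" and Pu: "\<And>snr. good snr \<Longrightarrow> measure M (Out snr) \<le>
      4 * v snr * ((exp (2 * Rt snr / \<kappa>) - 1)/(rho0 snr * c))^2 / smin^3"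
      using Pup[OF K(2)] unfolding \<kappa>_def by blast
    define w where "w snr = (exp (2 * Rt snr / \<kappa>) - 1)/(rho0 snr * c)" for snr
    have w_alt: "w x = ((1 + x*\<sigma>) powr ((2/\<kappa>)*r) - 1)/((2/3*c)*x)" if "x > 0" for x
    proof -
      have Rte: "Rt x = r * ln (1 + x*\<sigma>)" by (simp add: Rt_def target_rate_def)
      have "2 * Rt x / \<kappa> = (2/\<kappa>) * (r * ln (1 + x*\<sigma>))" by (simp add: Rte)
      then have e: "exp (2 * Rt x / \<kappa>) = (1 + x*\<sigma>) powr ((2/\<kappa>)*r)"
        using exp_rate[OF that \<sigma>, of "2/\<kappa>" r] by (simp only:)
      have d: "rho0 x * c = (2/3*c)*x" by (simp add: rho0_def)
      show ?thesis unfolding w_def e d ..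
    qed
    have lnwlim: "((\<lambda>x. ln (w x) / ln x) \<longlongrightarrow> (2/\<kappa>)*r - 1) at_top"
    proof -
      have "((\<lambda>x. ln (((1 + x*\<sigma>) powr ((2/\<kappa>)*r) - 1)/((2/3*c)*x)) / ln x) \<longlongrightarrow> (2/\<kappa>)*r - 1) at_top"
        using asym_ln[of "(2/\<kappa>)*r" "2/3*c" \<sigma>] r0 \<sigma> \<kappa>0 c by simp
      moreover have "eventually (\<lambda>x. ln (((1 + x*\<sigma>) powr ((2/\<kappa>)*r) - 1)/((2/3*c)*x)) / ln x = ln (w x) / ln x) at_top"
        using eventually_gt_at_top[of "0::real"] by eventually_elim (simp add: w_alt)
      ultimately show ?thesis by (rule Lim_transform_eventually)
    qed
    have fL: "f snr \<ge> - ((ln 4 - 3 * ln smin) / ln snr) - ln (v snr) / ln snr - 2 * (ln (w snr) / ln snr)"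
      if g: "good snr" for snr
    proof -
      have v0: "v snr > 0" and s1: "snr > 1" using g by (auto simp: good_def)
      have w0: "w snr > 0"
      proof -
        have "exp (2 * Rt snr / \<kappa>) > 1" using Rtpos[of snr] s1 \<kappa>0 by simp
        then show ?thesis unfolding w_def using \<rho>pos[OF g] c by simp
      qed
      have "ln (measure M (Out snr)) \<le> ln (4 * v snr * (w snr)^2 / smin^3)"
        using Pu[OF g] Ppos[OF g] unfolding w_def by (subst ln_le_cancel_iff) auto
      also have "\<dots> = ln 4 + ln (v snr) + 2 * ln (w snr) - 3 * ln smin"
        using v0 w0 sminpos by (simp add: ln_mult ln_div ln_realpow)
      finally have "- ln (measure M (Out snr)) \<ge> - (ln 4 - 3 * ln smin) - ln (v snr) - 2 * ln (w snr)" by linarith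
      then have "- ln (measure M (Out snr)) / ln snr \<ge> (- (ln 4 - 3 * ln smin) - ln (v snr) - 2 * ln (w snr)) / ln snr"
        using s1 by (intro divide_right_mono) auto
      then show ?thesis unfolding f_def Pdef by (simp add: diff_divide_distrib add_divide_distrib)
    qed
    have "((\<lambda>x. - ((ln 4 - 3 * ln smin) / ln x) - ln (v x) / ln x - 2 * (ln (w x) / ln x))
        \<longlongrightarrow> - 0 - (2*r - 1) - 2 * ((2/\<kappa>)*r - 1)) at_top"
      by (intro tendsto_intros lnvlim lnwlim asym_c)
    moreover have "a < - 0 - (2*r - 1) - 2 * ((2/\<kappa>)*r - 1)"
    proof -
      define X where "X = r/\<kappa>"
      define Y where "Y = r*\<delta>"
      have h1: "4 * r * (1/\<kappa>) < 4 * r * (1 + \<delta>)" using \<kappa>\<delta> r0 by (intro mult_strict_left_mono) auto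
      then have h1': "4 * X < 4 * r + 4 * Y" unfolding X_def Y_def by (simp add: algebra_simps)
      have h2: "4 * Y = (3 * (1 - 2 * r) - a) / 2" using r0 unfolding Y_def by (simp add: \<delta>_def)
      have h4: "(2/\<kappa>)*r = 2 * X" unfolding X_def by simp
      have e2: "4*X < 4*r + (3*(1-2*r) - a)/2" using h1' h2 by simp
      have e3: "4*r + (3*(1-2*r) - a)/2 \<le> 3 - 2*r - a" using a by (simp add: field_simps)
      have e1: "- 0 - (2*r - 1) - 2 * (2 * X - 1) = 3 - 2*r - 4*X" by simp
      show ?thesis unfolding h4 e1 using e2 e3 by linarith
    qed
    ultimately have "eventually (\<lambda>x. a < - ((ln 4 - 3 * ln smin) / ln x) - ln (v x) / ln x - 2 * (ln (w x) / ln x)) at_top"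
      by (rule order_tendstoD(1))
    then show "eventually (\<lambda>x. a < f x) at_top" using evgood
      by eventually_elim (use fL in force)
  qed
qed

end
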